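(* There is a formula $\phi_{sm}(O_{id},g_{id},t_s,t_f)$ of the language $\mathcal{L}_{mo}$ such that, for every database instance with a MOFT $\mathcal{M}$ and a PIA $\mathcal{P}$ stored as described in the context, the set of tuples satisfying $\phi_{sm}$ is exactly the SM-MOFT $\mathcal{M}^{sm}$ of $\mathcal{M}$ with respect to $\mathcal{P}$.
   Context: Trajectories and stops: a trajectory is a list $\langle (t_0,x_0,y_0),\dots,(t_n,x_n,y_n)\rangle$ of points of $\mathbb{R}^3$ with $t_0<\dots<t_n$. A place of interest (PoI) is a pair $C=(R_C,\Delta_C)$ with $R_C\subseteq\mathbb{R}^2$ a topologically closed polygon, polyline or point and $\Delta_C>0$ real (minimum duration); a PIA is a finite set $\mathcal{P}=\{C_1,\dots,C_N\}$ of PoIs with mutually disjoint geometries. A stop of $T$ w.r.t. $\mathcal{P}$ is a maximal contiguous subtrajectory $\langle (t_i,x_i,y_i),\dots,(t_{i+\ell},x_{i+\ell},y_{i+\ell})\rangle$ such that for some $k$, all $(x_{i+j},y_{i+j})\in R_{C_k}$ ($j=0,\dots,\ell$) and $t_{i+\ell}-t_i>\Delta_{C_k}$; it is a stop in $C_k$ with stop interval $[t_i,t_{i+\ell}]$. A MOFT $\mathcal{M}$ is a finite relation with schema $(O_{id},T,X,Y)$; for each identifier $O_{id}$ its tuples, ordered by time, form a trajectory (with rational coordinates). The SM-MOFT $\mathcal{M}^{sm}$ of $\mathcal{M}$ w.r.t. $\mathcal{P}$ is the set of tuples $(O_{id},g_{id},t_s,t_f)$ such that $O_{id}$ is the identifier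 of a trajectory in $\mathcal{M}$, $g_{id}$ is the identifier of the geometry of a PoI $C_k\in\mathcal{P}$, and the trajectory of $O_{id}$ has a stop in $C_k$ with stop interval $[t_s,t_f]$. Storage of the PIA: the geometries of the PoIs are the geometric elements of a GIS layer $L_{PoI}$, with a rollup relation $r_{L_{PoI}}^{Pt\to G}(x,y,g)$ stating that point $(x,y)$ lies in the geometry with identifier $g$ (given by linear constraints with rational coefficients); in the OLAP part the PoIs are elements $p_{id}$ of the bottom level $PoI_b$ of PoI dimensions $D$, with a relation $\alpha_{L_{PoI},D}^{PoI_b\to G}(p_{id})=g_{id}$ linking each PoI to its geometry identifier, and the minimum duration $\Delta$ of a PoI is stored as an attribute of $PoI_b$, accessed by an attribute function $\beta_{D}^{PoI_b\to \mathrm{duration}}$. The language $\mathcal{L}_{mo}$: multi-sorted first-order logic with real variables (ranging over $\mathbb{R}$), name variables (object identifiers), geometric identifier variables and dimension-level variables; atomic formulas use OLAP rollup functions $f_{D}^{A\to B}$, GIS rollup relations $r_{L}^{G_i\to G_j}$, relations $\alpha_{L,D}^{A\to G}$, attribute functions $\beta_{D}^{A\to B}$, alpha-numeric functions/relations/constants of the OLAP part, a 4-ary relation symbol for each MOFT, $+,\times,0,1,<$ on reals, and equality on all sorts; formulas are closed under Boolean connectives and quantification over all sorts, with standard semantics. *)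

theory Defs
  imports Complex_Main "HOL-Library.Product_Lexorder"
begin

text \<open>Sorts: object identifiers 'o, geometry identifiers 'g, elements of the bottom
  level PoI_b of the PoI dimension 'p, and reals.\<close>

record ('o, 'g, 'p) dbinst =
  moft  :: "('o \<times> real \<times> real \<times> real) set"   \<comment> \<open>MOFT with schema (Oid, T, X, Y)\<close>
  rpt   :: "real \<Rightarrow> real \<Rightarrow> 'g \<Rightarrow> bool"      \<comment> \<open>rollup relation r^{Pt->G}_{L_PoI}(x,y,g)\<close>
  poib  :: "'p set"
  alpha :: "'p \<Rightarrow> 'g"
  beta  :: "'p \<Rightarrow> real"                     \<comment> \<open>attribute function: minimum duration\<close>

definition region :: "('o,'g,'p) dbinst \<Rightarrow> 'p \<Rightarrow> (real \<times> real) set" where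
  "region I p = {(x, y). rpt I x y (alpha I p)}"

definition valid_inst :: "('o,'g,'p) dbinst \<Rightarrow> bool" where
  "valid_inst I \<longleftrightarrow>
     finite (moft I) \<and>
     (\<forall>oi t x y x' y'. (oi, t, x, y) \<in> moft I \<and> (oi, t, x', y') \<in> moft I \<longrightarrow> x = x' \<and> y = y') \<and>
     (\<forall>(oi, t, x, y) \<in> moft I. t \<in> \<rat> \<and> x \<in> \<rat> \<and> y \<in> \<rat>) \<and>
     finite (poib I) \<and>
     (\<forall>p \<in> poib I. beta I p > 0) \<and>
     inj_on (alpha I) (poib I) \<and>
     (\<forall>p \<in> poib I. \<forall>q \<in> poib I. p \<noteq> q \<longrightarrow> region I p \<inter> region I q = {})"

text \<open>The trajectory of identifier oi: its tuples ordered by time (times are distinct, so the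
  lexicographic order on (t,x,y) is the time order).\<close>
definition traj :: "('o,'g,'p) dbinst \<Rightarrow> 'o \<Rightarrow> (real \<times> real \<times> real) list" where
  "traj I oi = sorted_list_of_set {(t, x, y). (oi, t, x, y) \<in> moft I}"

definition ids :: "('o,'g,'p) dbinst \<Rightarrow> 'o set" where
  "ids I = {oi. \<exists>t x y. (oi, t, x, y) \<in> moft I}"

definition stays :: "(real \<times> real \<times> real) list \<Rightarrow> (real \<times> real) set \<Rightarrow> real \<Rightarrow> nat \<Rightarrow> nat \<Rightarrow> bool" where
  "stays T R D i l \<longleftrightarrow> i + l < length T \<and> (\<forall>j \<le> l. snd (T ! (i + j)) \<in> R) \<and>
     fst (T ! (i + l)) - fst (T ! i) > D"

definition stop_cand :: "('o,'g,'p) dbinst \<Rightarrow> (real \<times> real \<times> real) list \<Rightarrow> nat \<Rightarrow> nat \<Rightarrow> bool" where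
  "stop_cand I T i l \<longleftrightarrow> (\<exists>k \<in> poib I. stays T (region I k) (beta I k) i l)"

definition is_stop_in :: "('o,'g,'p) dbinst \<Rightarrow> (real \<times> real \<times> real) list \<Rightarrow> 'p \<Rightarrow> nat \<Rightarrow> nat \<Rightarrow> bool" where
  "is_stop_in I T k i l \<longleftrightarrow> k \<in> poib I \<and> stays T (region I k) (beta I k) i l \<and>
     (\<forall>i' l'. stop_cand I T i' l' \<and> i' \<le> i \<and> i + l \<le> i' + l' \<longrightarrow> i' = i \<and> l' = l)"

definition sm_moft :: "('o,'g,'p) dbinst \<Rightarrow> ('o \<times> 'g \<times> real \<times> real) set" where
  "sm_moft I = {(oi, g, ts, tf). oi \<in> ids I \<and>
     (\<exists>k i l. alpha I k = g \<and> is_stop_in I (traj I oi) k i l \<and>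
        ts = fst (traj I oi ! i) \<and> tf = fst (traj I oi ! (i + l)))}"

datatype dtm = DVar nat
datatype gtm = GVar nat | GAlpha dtm
datatype rtm = RVar nat | RZero | ROne | RPlus rtm rtm | RTimes rtm rtm
  | RBeta dtm

datatype fm =
    FFalse
  | RLess rtm rtm | REq rtm rtm
  | NEq nat nat | GEq gtm gtm | DEq dtm dtm
  | Moft nat rtm rtm rtm
  | RollPt rtm rtm gtm
  | AlphaRel dtm gtm
  | Neg fm | Conj fm fm | Disj fm fm
  | ExR nat fm | ExN nat fm | ExG nat fm | ExD nat fm

record ('o, 'g, 'p) env =
  eR :: "nat \<Rightarrow> real"
  eN :: "nat \<Rightarrow> 'o"
  eG :: "nat \<Rightarrow> 'g"
  eD :: "nat \<Rightarrow> 'p"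

fun evd :: "('o,'g,'p) env \<Rightarrow> dtm \<Rightarrow> 'p" where
  "evd e (DVar n) = eD e n"

fun evg :: "('o,'g,'p) dbinst \<Rightarrow> ('o,'g,'p) env \<Rightarrow> gtm \<Rightarrow> 'g" where
  "evg I e (GVar n) = eG e n"
| "evg I e (GAlpha d) = alpha I (evd e d)"

fun evr :: "('o,'g,'p) dbinst \<Rightarrow> ('o,'g,'p) env \<Rightarrow> rtm \<Rightarrow> real" where
  "evr I e (RVar n) = eR e n"
| "evr I e RZero = 0"
| "evr I e ROne = 1"
| "evr I e (RPlus a b) = evr I e a + evr I e b"
| "evr I e (RTimes a b) = evr I e a * evr I e b"
| "evr I e (RBeta d) = beta I (evd e d)"

fun sat :: "('o,'g,'p) dbinst \<Rightarrow> ('o,'g,'p) env \<Rightarrow> fm \<Rightarrow> bool" where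
  "sat I e FFalse = False"
| "sat I e (RLess a b) = (evr I e a < evr I e b)"
| "sat I e (REq a b) = (evr I e a = evr I e b)"
| "sat I e (NEq m n) = (eN e m = eN e n)"
| "sat I e (GEq a b) = (evg I e a = evg I e b)"
| "sat I e (DEq a b) = (evd e a = evd e b)"
| "sat I e (Moft n t x y) = ((eN e n, evr I e t, evr I e x, evr I e y) \<in> moft I)"
| "sat I e (RollPt x y g) = rpt I (evr I e x) (evr I e y) (evg I e g)"
| "sat I e (AlphaRel d g) = (alpha I (evd e d) = evg I e g)"
| "sat I e (Neg f) = (\<not> sat I e f)"
| "sat I e (Conj f g) = (sat I e f \<and> sat I e g)"
| "sat I e (Disj f g) = (sat I e f \<or> sat I e g)"
| "sat I e (ExR n f) = (\<exists>v::real. sat I (e\<lparr>eR := (eR e)(n := v)\<rparr>) f)"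
| "sat I e (ExN n f) = (\<exists>v. sat I (e\<lparr>eN := (eN e)(n := v)\<rparr>) f)"
| "sat I e (ExG n f) = (\<exists>v. sat I (e\<lparr>eG := (eG e)(n := v)\<rparr>) f)"
| "sat I e (ExD n f) = (\<exists>v \<in> poib I. sat I (e\<lparr>eD := (eD e)(n := v)\<rparr>) f)"

end

theory Submission
  imports Defs
begin

definition pt :: "('o,'g,'p) dbinst \<Rightarrow> 'o \<Rightarrow> real \<Rightarrow> bool" where
  "pt I oi t \<longleftrightarrow> (\<exists>x y. (oi, t, x, y) \<in> moft I)"

definition stayT :: "('o,'g,'p) dbinst \<Rightarrow> 'o \<Rightarrow> 'p \<Rightarrow> real \<Rightarrow> real \<Rightarrow> bool" where
  "stayT I oi k a b \<longleftrightarrow> a + beta I k < b \<and>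
     (\<forall>t x y. (oi, t, x, y) \<in> moft I \<and> a \<le> t \<and> t \<le> b \<longrightarrow> rpt I x y (alpha I k))"

definition SEM :: "('o,'g,'p) dbinst \<Rightarrow> 'o \<Rightarrow> 'g \<Rightarrow> real \<Rightarrow> real \<Rightarrow> bool" where
  "SEM I oi g ts tf \<longleftrightarrow> pt I oi ts \<and> pt I oi tf \<and> ts \<le> tf \<and>
     (\<exists>k\<in>poib I. alpha I k = g \<and> stayT I oi k ts tf \<and>
       \<not> (\<exists>ts' tf'. pt I oi ts' \<and> pt I oi tf' \<and> ts' \<le> ts \<and> tf \<le> tf' \<and>
            \<not> (ts' = ts \<and> tf' = tf) \<and> (\<exists>k'\<in>poib I. stayT I oi k' ts' tf')))"

definition Le :: "rtm \<Rightarrow> rtm \<Rightarrow> fm" where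
  "Le a b = Disj (RLess a b) (REq a b)"

definition Pt :: "rtm \<Rightarrow> fm" where
  "Pt t = ExR 10 (ExR 11 (Moft 0 t (RVar 10) (RVar 11)))"

definition Stay :: "dtm \<Rightarrow> rtm \<Rightarrow> rtm \<Rightarrow> fm" where
  "Stay kd a b = Conj (RLess (RPlus a (RBeta kd)) b)
     (Neg (ExR 20 (ExR 21 (ExR 22 (Conj (Moft 0 (RVar 20) (RVar 21) (RVar 22))
        (Conj (Le a (RVar 20)) (Conj (Le (RVar 20) b)
          (Neg (RollPt (RVar 21) (RVar 22) (GAlpha kd))))))))))"

definition phi :: fm where
  "phi = Conj (Pt (RVar 0)) (Conj (Pt (RVar 1)) (Conj (Le (RVar 0) (RVar 1))
     (ExD 0 (Conj (AlphaRel (DVar 0) (GVar 0)) (Conj (Stay (DVar 0) (RVar 0) (RVar 1))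
       (Neg (ExR 2 (ExR 3 (Conj (Pt (RVar 2)) (Conj (Pt (RVar 3))
         (Conj (Le (RVar 2) (RVar 0)) (Conj (Le (RVar 1) (RVar 3))
           (Conj (Neg (Conj (REq (RVar 2) (RVar 0)) (REq (RVar 3) (RVar 1))))
             (ExD 1 (Stay (DVar 1) (RVar 2) (RVar 3))))))))))))))))"

lemma sat_phi: "sat I e phi \<longleftrightarrow> SEM I (eN e 0) (eG e 0) (eR e 0) (eR e 1)"
  unfolding phi_def Pt_def Stay_def Le_def SEM_def pt_def stayT_def
  by (auto simp: less_eq_real_def)

lemma traj_facts:
  assumes v: "valid_inst I"
  shows "set (traj I oi) = {(t, x, y). (oi, t, x, y) \<in> moft I}"
    and "sorted (traj I oi)" and "distinct (traj I oi)"
proof -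
  have "{(t, x, y). (oi, t, x, y) \<in> moft I} \<subseteq> (\<lambda>(o', t, x, y). (t, x, y)) ` moft I"
    by (auto simp: image_iff) force
  moreover have "finite (moft I)" using v by (simp add: valid_inst_def)
  ultimately have "finite {(t, x, y). (oi, t, x, y) \<in> moft I}" by (meson finite_imageI finite_subset)
  then show "set (traj I oi) = {(t, x, y). (oi, t, x, y) \<in> moft I}"
    and "sorted (traj I oi)" and "distinct (traj I oi)" by (auto simp: traj_def)
qed

lemma traj_mono:
  assumes v: "valid_inst I" and ij: "i < j" "j < length (traj I oi)"
  shows "fst (traj I oi ! i) < fst (traj I oi ! j)"
proof -
  let ?T = "traj I oi"
  have le: "?T ! i \<le> ?T ! j" using traj_facts(2)[OF v] ij by (simp add: sorted_iff_nth_mono)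
  have ne: "?T ! i \<noteq> ?T ! j" using traj_facts(3)[OF v] ij by (simp add: nth_eq_iff_index_eq)
  obtain t x y where a: "?T ! i = (t, x, y)" by (cases "?T ! i") auto
  obtain t' x' y' where b: "?T ! j = (t', x', y')" by (cases "?T ! j") auto
  have ma: "(oi, t, x, y) \<in> moft I" using a traj_facts(1)[OF v] ij nth_mem[of i ?T]
    by (metis (no_types, lifting) case_prodD mem_Collect_eq order.strict_trans)
  have mb: "(oi, t', x', y') \<in> moft I" using b traj_facts(1)[OF v] ij nth_mem[of j ?T]
    by (metis (no_types, lifting) case_prodD mem_Collect_eq)
  have "t \<noteq> t'"
  proof
    assume "t = t'"
    then have "x = x' \<and> y = y'" using v ma mb unfolding valid_inst_def by blast
    then show False using ne a b \<open>t = t'\<close> by simp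
  qed
  then show ?thesis using le a b by auto
qed

lemma traj_le_iff:
  assumes v: "valid_inst I" and "i < length (traj I oi)" "j < length (traj I oi)"
  shows "fst (traj I oi ! i) \<le> fst (traj I oi ! j) \<longleftrightarrow> i \<le> j"
  using traj_mono[OF v, of i j oi] traj_mono[OF v, of j i oi] assms
  by (cases i j rule: linorder_cases) auto

lemma traj_eq_iff:
  assumes v: "valid_inst I" and "i < length (traj I oi)" "j < length (traj I oi)"
  shows "fst (traj I oi ! i) = fst (traj I oi ! j) \<longleftrightarrow> i = j"
  using traj_le_iff[OF assms] traj_le_iff[OF v assms(3,2)] by auto

lemma pt_iff:
  assumes v: "valid_inst I"
  shows "pt I oi t \<longleftrightarrow> (\<exists>i < length (traj I oi). fst (traj I oi ! i) = t)"
proof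
  assume "pt I oi t"
  then obtain x y where "(oi, t, x, y) \<in> moft I" by (auto simp: pt_def)
  then have "(t, x, y) \<in> set (traj I oi)" using traj_facts(1)[OF v] by auto
  then show "\<exists>i < length (traj I oi). fst (traj I oi ! i) = t"
    by (metis fst_conv in_set_conv_nth)
next
  assume "\<exists>i < length (traj I oi). fst (traj I oi ! i) = t"
  then obtain i where i: "i < length (traj I oi)" "fst (traj I oi ! i) = t" by blast
  obtain t' x y where a: "traj I oi ! i = (t', x, y)" by (cases "traj I oi ! i") auto
  have "(t', x, y) \<in> set (traj I oi)" using a i nth_mem by metis
  then show "pt I oi t" using traj_facts(1)[OF v] a i by (auto simp: pt_def)
qed

lemma stays_iff:
  assumes v: "valid_inst I"
  shows "stays (traj I oi) (region I k) (beta I k) i l \<longleftrightarrow>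
    i + l < length (traj I oi) \<and> stayT I oi k (fst (traj I oi ! i)) (fst (traj I oi ! (i + l)))"
proof (cases "i + l < length (traj I oi)")
  case False then show ?thesis by (simp add: stays_def)
next
  case len: True
  let ?T = "traj I oi"
  have memT: "\<And>m. m < length ?T \<Longrightarrow> (oi, fst (?T ! m), fst (snd (?T ! m)), snd (snd (?T ! m))) \<in> moft I"
  proof -
    fix m assume "m < length ?T"
    then have "?T ! m \<in> set ?T" by simp
    moreover obtain a b c where "?T ! m = (a, b, c)" by (cases "?T ! m") auto
    ultimately show "(oi, fst (?T ! m), fst (snd (?T ! m)), snd (snd (?T ! m))) \<in> moft I"
      using traj_facts(1)[OF v, of oi] by auto
  qed
  show ?thesis
  proof
    assume s: "stays ?T (region I k) (beta I k) i l"
    have "\<forall>t x y. (oi, t, x, y) \<in> moft I \<and> fst (?T ! i) \<le> t \<and> t \<le> fst (?T ! (i + l)) \<longrightarrow> rpt I x y (alpha I k)"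
    proof (intro allI impI)
      fix t x y assume h: "(oi, t, x, y) \<in> moft I \<and> fst (?T ! i) \<le> t \<and> t \<le> fst (?T ! (i + l))"
      then have "(t, x, y) \<in> set ?T" using traj_facts(1)[OF v] by auto
      then obtain m where m: "m < length ?T" "?T ! m = (t, x, y)" by (metis in_set_conv_nth)
      have "i \<le> m" using traj_le_iff[OF v, of i oi m] h m len by auto
      moreover have "m \<le> i + l" using traj_le_iff[OF v, of m oi "i+l"] h m len by auto
      ultimately have "m - i \<le> l" by simp
      then have "snd (?T ! (i + (m - i))) \<in> region I k" using s unfolding stays_def by blast
      then show "rpt I x y (alpha I k)" using m \<open>i \<le> m\<close> by (simp add: region_def)
    qed
    then show "i + l < length ?T \<and> stayT I oi k (fst (?T ! i)) (fst (?T ! (i + l)))"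
      using s len by (simp add: stays_def stayT_def)
  next
    assume h: "i + l < length ?T \<and> stayT I oi k (fst (?T ! i)) (fst (?T ! (i + l)))"
    have "\<forall>j \<le> l. snd (?T ! (i + j)) \<in> region I k"
    proof (intro allI impI)
      fix j assume j: "j \<le> l"
      have m: "i + j < length ?T" using j len by simp
      have "fst (?T ! i) \<le> fst (?T ! (i + j))" using traj_le_iff[OF v, of i oi "i+j"] m by simp
      moreover have "fst (?T ! (i + j)) \<le> fst (?T ! (i + l))" using traj_le_iff[OF v, of "i+j" oi "i+l"] m len j by simp
      ultimately have "rpt I (fst (snd (?T ! (i + j)))) (snd (snd (?T ! (i + j)))) (alpha I k)"
        using h memT[OF m] unfolding stayT_def by blast
      then show "snd (?T ! (i + j)) \<in> region I k" by (cases "snd (?T ! (i + j))") (simp add: region_def)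
    qed
    then show "stays ?T (region I k) (beta I k) i l" using h by (auto simp: stays_def stayT_def)
  qed
qed

lemma main:
  assumes v: "valid_inst I"
  shows "SEM I oi g ts tf \<longleftrightarrow> (oi, g, ts, tf) \<in> sm_moft I"
proof
  let ?T = "traj I oi"
  assume S: "SEM I oi g ts tf"
  then obtain i where i: "i < length ?T" "fst (?T ! i) = ts" using pt_iff[OF v] by (auto simp: SEM_def)
  obtain m where m: "m < length ?T" "fst (?T ! m) = tf" using S pt_iff[OF v] by (auto simp: SEM_def)
  have im: "i \<le> m" using S i m traj_le_iff[OF v, of i oi m] by (auto simp: SEM_def)
  define l where "l = m - i"
  have ml: "m = i + l" using im l_def by simp
  obtain k where k: "k \<in> poib I" "alpha I k = g" "stayT I oi k ts tf"
    and nmax: "\<not> (\<exists>ts' tf'. pt I oi ts' \<and> pt I oi tf' \<and> ts' \<le> ts \<and> tf \<le> tf' \<and>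
            \<not> (ts' = ts \<and> tf' = tf) \<and> (\<exists>k'\<in>poib I. stayT I oi k' ts' tf'))"
    using S by (auto simp: SEM_def)
  have st: "stays ?T (region I k) (beta I k) i l" using stays_iff[OF v] k m i ml by auto
  have maxi: "\<forall>i' l'. stop_cand I ?T i' l' \<and> i' \<le> i \<and> i + l \<le> i' + l' \<longrightarrow> i' = i \<and> l' = l"
  proof (intro allI impI)
    fix i' l' assume h: "stop_cand I ?T i' l' \<and> i' \<le> i \<and> i + l \<le> i' + l'"
    then obtain k' where k': "k' \<in> poib I" "stays ?T (region I k') (beta I k') i' l'"
      by (auto simp: stop_cand_def)
    then have l': "i' + l' < length ?T" "stayT I oi k' (fst (?T ! i')) (fst (?T ! (i' + l')))"
      using stays_iff[OF v] by auto
    have p1: "pt I oi (fst (?T ! i'))" unfolding pt_iff[OF v] using l'(1) by (intro exI[of _ i']) simp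
    have p2: "pt I oi (fst (?T ! (i' + l')))" using pt_iff[OF v] l' by auto
    have o1: "fst (?T ! i') \<le> ts" using traj_le_iff[OF v, of i' oi i] h i l' by auto
    have o2: "tf \<le> fst (?T ! (i' + l'))" using traj_le_iff[OF v, of "i+l" oi "i'+l'"] h m ml l' by auto
    have "fst (?T ! i') = ts \<and> fst (?T ! (i' + l')) = tf"
      using nmax p1 p2 o1 o2 k' l' by blast
    then have "i' = i \<and> i' + l' = i + l"
      using traj_eq_iff[OF v, of i' oi i] traj_eq_iff[OF v, of "i'+l'" oi "i+l"] i m ml l' by auto
    then show "i' = i \<and> l' = l" by simp
  qed
  have "is_stop_in I ?T k i l" using k st maxi unfolding is_stop_in_def by blast
  moreover have "oi \<in> ids I" using S by (auto simp: SEM_def pt_def ids_def)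
  ultimately show "(oi, g, ts, tf) \<in> sm_moft I" unfolding sm_moft_def
    using k i m ml by blast
next
  let ?T = "traj I oi"
  assume "(oi, g, ts, tf) \<in> sm_moft I"
  then obtain k i l where k: "alpha I k = g" "is_stop_in I ?T k i l"
    "ts = fst (?T ! i)" "tf = fst (?T ! (i + l))" by (auto simp: sm_moft_def)
  have kp: "k \<in> poib I" and st: "stays ?T (region I k) (beta I k) i l"
    and maxi: "\<forall>i' l'. stop_cand I ?T i' l' \<and> i' \<le> i \<and> i + l \<le> i' + l' \<longrightarrow> i' = i \<and> l' = l"
    using k by (auto simp: is_stop_in_def)
  have len: "i + l < length ?T" and sT: "stayT I oi k ts tf" using stays_iff[OF v] st k by auto
  have p1: "pt I oi ts" unfolding pt_iff[OF v] using len k by (intro exI[of _ i]) simp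
  have p2: "pt I oi tf" unfolding pt_iff[OF v] using len k by (intro exI[of _ "i+l"]) simp
  note p = p1 p2
  have o: "ts \<le> tf" using traj_le_iff[OF v, of i oi "i+l"] len k by auto
  have nmax: "\<not> (\<exists>ts' tf'. pt I oi ts' \<and> pt I oi tf' \<and> ts' \<le> ts \<and> tf \<le> tf' \<and>
            \<not> (ts' = ts \<and> tf' = tf) \<and> (\<exists>k'\<in>poib I. stayT I oi k' ts' tf'))"
  proof
    assume "\<exists>ts' tf'. pt I oi ts' \<and> pt I oi tf' \<and> ts' \<le> ts \<and> tf \<le> tf' \<and>
            \<not> (ts' = ts \<and> tf' = tf) \<and> (\<exists>k'\<in>poib I. stayT I oi k' ts' tf')"
    then obtain ts' tf' k' where h: "pt I oi ts'" "pt I oi tf'" "ts' \<le> ts" "tf \<le> tf'"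
      "\<not> (ts' = ts \<and> tf' = tf)" "k' \<in> poib I" "stayT I oi k' ts' tf'" by blast
    obtain i' where i': "i' < length ?T" "fst (?T ! i') = ts'" using h pt_iff[OF v] by auto
    obtain m' where m': "m' < length ?T" "fst (?T ! m') = tf'" using h pt_iff[OF v] by auto
    have a1: "i' \<le> i" using traj_le_iff[OF v, of i' oi i] i' h len k by auto
    have a2: "i + l \<le> m'" using traj_le_iff[OF v, of "i+l" oi m'] m' h len k by auto
    define l' where "l' = m' - i'"
    have ml: "m' = i' + l'" using a1 a2 l'_def by simp
    have "stays ?T (region I k') (beta I k') i' l'" using stays_iff[OF v] h i' m' ml by auto
    then have "stop_cand I ?T i' l'" using h by (auto simp: stop_cand_def)
    then have "i' = i \<and> l' = l" using maxi a1 a2 ml by blast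
    then show False using h i' m' ml k by auto
  qed
  show "SEM I oi g ts tf" unfolding SEM_def using p o kp k sT nmax by blast
qed

theorem proposition3:
  "\<exists>\<phi>::fm. \<forall>(I::('o,'g,'p) dbinst). valid_inst I \<longrightarrow>
     (\<forall>e::('o,'g,'p) env.
        sat I e \<phi> \<longleftrightarrow> (eN e 0, eG e 0, eR e 0, eR e 1) \<in> sm_moft I)"
  by (intro exI[of _ phi] allI impI) (simp add: sat_phi main)

end
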